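(* For every feasible set of jobs, the online policy Thrashing completes every job $j$ with interval stretch $s_j=(C_j-r_j)/(d_j-r_j)\le 4$.
   Context: Jobs $j$ have release time $r_j$, due date $d_j>r_j$, work $w_j>0$, and linear speed function $f_j(t)=m_j(t-r_j)$ with $m_j>0$. A single processor runs at most one job at a time, preemption is allowed, and running job $j$ during a set of times $S$ completes $\int_S f_j(t)\,dt$ units of its work; $C_j$ denotes the completion time of job $j$. A set of jobs is feasible if some schedule runs each job only within $[r_j,d_j]$ and completes it by $d_j$. Online: job $j$ becomes known only at time $r_j$. The policy Thrashing: at each time $t$, consider the released unfinished jobs $j$ whose current stretch $(t-r_j)/(d_j-r_j)$ is at least $2$; if there is none, the processor idles, otherwise it runs the one among them with the latest release time (ties broken arbitrarily). *)

theory Defs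
  imports "HOL-Analysis.Analysis"
begin

text \<open>Each job j has release time r j,
 due date d j, work w j and speed slope m j; its speed function is
 f_j(t) = m j * (t - r j).\<close>

definition rate :: "(real \<Rightarrow> 'j option) \<Rightarrow> ('j \<Rightarrow> real) \<Rightarrow> ('j \<Rightarrow> real) \<Rightarrow> 'j \<Rightarrow> real \<Rightarrow> real" where
  "rate \<sigma> r m j t = (if \<sigma> t = Some j then m j * (t - r j) else 0)"

definition work :: "(real \<Rightarrow> 'j option) \<Rightarrow> ('j \<Rightarrow> real) \<Rightarrow> ('j \<Rightarrow> real) \<Rightarrow> 'j \<Rightarrow> real \<Rightarrow> real \<Rightarrow> real" where
  "work \<sigma> r m j a b = integral {a..b} (rate \<sigma> r m j)"

definition valid_schedule :: "'j set \<Rightarrow> ('j \<Rightarrow> real) \<Rightarrow> ('j \<Rightarrow> real) \<Rightarrow> (real \<Rightarrow> 'j option) \<Rightarrow> bool" where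
  "valid_schedule J r m \<sigma> \<longleftrightarrow>
     (\<forall>t j. \<sigma> t = Some j \<longrightarrow> j \<in> J) \<and>
     (\<forall>j\<in>J. \<forall>a b. rate \<sigma> r m j integrable_on {a..b})"

definition feasible :: "'j set \<Rightarrow> ('j \<Rightarrow> real) \<Rightarrow> ('j \<Rightarrow> real) \<Rightarrow> ('j \<Rightarrow> real) \<Rightarrow> ('j \<Rightarrow> real) \<Rightarrow> bool" where
  "feasible J r d w m \<longleftrightarrow>
     (\<exists>\<sigma>. valid_schedule J r m \<sigma> \<and>
          (\<forall>t j. \<sigma> t = Some j \<longrightarrow> r j \<le> t \<and> t \<le> d j) \<and>
          (\<forall>j\<in>J. work \<sigma> r m j (r j) (d j) \<ge> w j))"

definition thrash_active :: "'j set \<Rightarrow> ('j \<Rightarrow> real) \<Rightarrow> ('j \<Rightarrow> real) \<Rightarrow> ('j \<Rightarrow> real) \<Rightarrow> ('j \<Rightarrow> real)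
     \<Rightarrow> (real \<Rightarrow> 'j option) \<Rightarrow> real \<Rightarrow> 'j set" where
  "thrash_active J r d w m \<sigma> t =
     {j \<in> J. r j \<le> t \<and> work \<sigma> r m j (r j) t < w j \<and> (t - r j) / (d j - r j) \<ge> 2}"

definition thrashing :: "'j set \<Rightarrow> ('j \<Rightarrow> real) \<Rightarrow> ('j \<Rightarrow> real) \<Rightarrow> ('j \<Rightarrow> real) \<Rightarrow> ('j \<Rightarrow> real)
     \<Rightarrow> (real \<Rightarrow> 'j option) \<Rightarrow> bool" where
  "thrashing J r d w m \<sigma> \<longleftrightarrow> valid_schedule J r m \<sigma> \<and>
     (\<forall>t. (thrash_active J r d w m \<sigma> t = {} \<longrightarrow> \<sigma> t = None) \<and>
          (thrash_active J r d w m \<sigma> t \<noteq> {} \<longrightarrow>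
             (\<exists>j\<in>thrash_active J r d w m \<sigma> t. \<sigma> t = Some j \<and>
                (\<forall>k\<in>thrash_active J r d w m \<sigma> t. r k \<le> r j))))"

definition completion_time :: "(real \<Rightarrow> 'j option) \<Rightarrow> ('j \<Rightarrow> real) \<Rightarrow> ('j \<Rightarrow> real) \<Rightarrow> ('j \<Rightarrow> real) \<Rightarrow> 'j \<Rightarrow> real" where
  "completion_time \<sigma> r w m j = Inf {t. r j \<le> t \<and> work \<sigma> r m j (r j) t \<ge> w j}"

end

theory Submission
  imports Defs
begin

lemma sched_active:
  assumes "thrashing J r d w m \<sigma>" "\<sigma> t = Some k"
  shows "k \<in> thrash_active J r d w m \<sigma> t"
  using assms unfolding thrashing_def by (metis option.distinct(1) option.inject)

lemma rate_nonneg: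
  assumes "thrashing J r d w m \<sigma>" "\<forall>j\<in>J. r j < d j \<and> 0 < w j \<and> 0 < m j"
  shows "0 \<le> rate \<sigma> r m k t"
proof (cases "\<sigma> t = Some k")
  case True
  then have "k \<in> thrash_active J r d w m \<sigma> t" using sched_active assms(1) by metis
  then have "k \<in> J" "r k \<le> t" unfolding thrash_active_def by auto
  then show ?thesis using True assms(2) unfolding rate_def by auto
qed (simp add: rate_def)

lemma rate_zero_before:
  assumes "thrashing J r d w m \<sigma>" "t \<le> r k"
  shows "rate \<sigma> r m k t = 0"
proof (cases "\<sigma> t = Some k")
  case True
  then have "k \<in> thrash_active J r d w m \<sigma> t" using sched_active assms(1) by metis
  then have "r k \<le> t" unfolding thrash_active_def by auto
  then show ?thesis using True assms(2) unfolding rate_def by auto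
qed (simp add: rate_def)

lemma work_le:
  assumes thr: "thrashing J r d w m \<sigma>" and pos: "\<forall>j\<in>J. r j < d j \<and> 0 < w j \<and> 0 < m j"
    and kJ: "k \<in> J" and t1: "r k \<le> t1"
  shows "work \<sigma> r m k (r k) t1 \<le> w k"
proof (rule ccontr)
  assume neg: "\<not> ?thesis"
  define g where "g = (\<lambda>x. integral {r k..x} (rate \<sigma> r m k))"
  have int: "rate \<sigma> r m k integrable_on {a..b}" for a b
    using thr kJ unfolding thrashing_def valid_schedule_def by auto
  have cont: "continuous_on {r k..t1} g"
    unfolding g_def by (rule indefinite_integral_continuous_1[OF int])
  define S where "S = {r k..t1} \<inter> g -` {..w k}"
  have "closed S" unfolding S_def
    by (rule continuous_closed_preimage[OF cont]) auto
  have "r k \<in> S" using t1 pos kJ unfolding S_def g_def by auto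
  have bdd: "bdd_above S" unfolding S_def by (rule bdd_aboveI[of _ t1]) auto
  define s where "s = Sup S"
  have sS: "s \<in> S" unfolding s_def using closed_contains_Sup[OF _ bdd \<open>closed S\<close>] \<open>r k \<in> S\<close> by blast
  have g1: "g t1 > w k" using neg unfolding g_def work_def by simp
  have "s \<noteq> t1" using sS g1 unfolding S_def by auto
  moreover have "s \<le> t1" "r k \<le> s" using sS unfolding S_def by auto
  ultimately have st: "s < t1" by simp
  have zero: "rate \<sigma> r m k x = 0" if "x \<in> {s..t1} - {s}" for x
  proof -
    have x: "s < x" "x \<le> t1" using that by auto
    have "x \<notin> S" using cSup_upper[OF _ bdd, of x] x unfolding s_def by force
    then have "g x > w k" using x \<open>r k \<le> s\<close> unfolding S_def by auto
    then have "\<sigma> x \<noteq> Some k"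
      using sched_active[OF thr, of x k] unfolding thrash_active_def g_def work_def by force
    then show ?thesis unfolding rate_def by simp
  qed
  have "integral {s..t1} (rate \<sigma> r m k) = integral {s..t1} (\<lambda>_. 0::real)"
    by (rule integral_spike[of "{s}"]) (use zero in auto)
  then have "integral {s..t1} (rate \<sigma> r m k) = 0" by simp
  moreover have "g s + integral {s..t1} (rate \<sigma> r m k) = g t1"
    unfolding g_def by (rule Henstock_Kurzweil_Integration.integral_combine[OF \<open>r k \<le> s\<close> \<open>s \<le> t1\<close> int])
  ultimately have "g t1 = g s" by simp
  moreover have "g s \<le> w k" using sS unfolding S_def by auto
  ultimately show False using g1 by simp
qed


lemma int_le:
  assumes thr: "thrashing J r d w m \<sigma>" and pos: "\<forall>j\<in>J. r j < d j \<and> 0 < w j \<and> 0 < m j"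
    and kJ: "k \<in> J"
  shows "integral {x..y} (rate \<sigma> r m k) \<le> w k"
proof (cases "y < x")
  case True
  then show ?thesis using pos kJ by auto
next
  case False
  have int: "rate \<sigma> r m k integrable_on {a..b}" for a b
    using thr kJ unfolding thrashing_def valid_schedule_def by auto
  define lo where "lo = min x (r k)"
  define hi where "hi = max y (r k)"
  have "integral {x..y} (rate \<sigma> r m k) \<le> integral {lo..hi} (rate \<sigma> r m k)"
    by (rule integral_subset_le) (auto simp: lo_def hi_def int rate_nonneg[OF thr pos])
  also have "\<dots> = integral {lo..r k} (rate \<sigma> r m k) + integral {r k..hi} (rate \<sigma> r m k)"
    by (rule Henstock_Kurzweil_Integration.integral_combine[symmetric]) (auto simp: lo_def hi_def int)
  also have "integral {lo..r k} (rate \<sigma> r m k) = integral {lo..r k} (\<lambda>_. 0::real)"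
    by (rule integral_cong) (auto intro: rate_zero_before[OF thr])
  also have "integral {r k..hi} (rate \<sigma> r m k) \<le> w k"
    using work_le[OF thr pos kJ, of hi] unfolding work_def hi_def by auto
  finally show ?thesis by simp
qed

theorem mainTheorem7:
  fixes J :: "'j set" and r d w m :: "'j \<Rightarrow> real" and \<sigma> :: "real \<Rightarrow> 'j option"
  assumes "finite J"
    and "\<forall>j\<in>J. r j < d j \<and> 0 < w j \<and> 0 < m j"
    and "feasible J r d w m"
    and "thrashing J r d w m \<sigma>"
  shows "\<forall>j\<in>J. (\<exists>t\<ge>r j. work \<sigma> r m j (r j) t \<ge> w j) \<and>
                 (completion_time \<sigma> r w m j - r j) / (d j - r j) \<le> 4"
proof
  fix j assume jJ: "j \<in> J"
  note fin = assms(1) and pos = assms(2) and thr = assms(4)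
  obtain \<tau> where vt: "valid_schedule J r m \<tau>" and tin: "\<forall>t j. \<tau> t = Some j \<longrightarrow> r j \<le> t \<and> t \<le> d j"
    and tw: "\<forall>j\<in>J. work \<tau> r m j (r j) (d j) \<ge> w j"
    using assms(3) unfolding feasible_def by blast
  have intS: "rate \<sigma> r m k integrable_on {a..b}" if "k \<in> J" for a b k
    using thr that unfolding thrashing_def valid_schedule_def by auto
  have intT: "rate \<tau> r m k integrable_on {a..b}" if "k \<in> J" for a b k
    using vt that unfolding valid_schedule_def by auto
  have tnn: "0 \<le> rate \<tau> r m k t" if "k \<in> J" for k t
    using tin pos that unfolding rate_def by auto
  define p where "p = d j - r j"
  have pp: "p > 0" using pos jJ unfolding p_def by auto
  define T where "T = r j + 4 * p"
  have claim: "work \<sigma> r m j (r j) T \<ge> w j"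
  proof (rule ccontr)
    assume "\<not> ?thesis"
    then have gT: "work \<sigma> r m j (r j) T < w j" by simp
    define g where "g = (\<lambda>x. integral {r j..x} (rate \<sigma> r m j))"
    have cont: "continuous_on {r j..T+1} g"
      unfolding g_def by (rule indefinite_integral_continuous_1[OF intS[OF jJ]])
    have Tin: "T \<in> {r j..T+1}" using pp unfolding T_def by auto
    obtain \<delta> where dp: "\<delta> > 0" and dd: "\<forall>x'\<in>{r j..T+1}. dist x' T < \<delta> \<longrightarrow> dist (g x') (g T) < w j - g T"
      using cont Tin gT unfolding continuous_on_iff g_def work_def
      by (metis diff_gt_0_iff_gt)
    define \<epsilon> where "\<epsilon> = min (\<delta>/2) 1"
    have ep: "\<epsilon> > 0" "\<epsilon> \<le> 1" "\<epsilon> < \<delta>" using dp unfolding \<epsilon>_def by auto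
    define T' where "T' = T + \<epsilon>"
    have "T' \<in> {r j..T+1}" using ep pp unfolding T'_def T_def by auto
    moreover have "dist T' T < \<delta>" using ep unfolding T'_def dist_real_def by auto
    ultimately have "dist (g T') (g T) < w j - g T" using dd by blast
    then have gT': "g T' < w j" unfolding dist_real_def by auto
    have gmono: "g t < w j" if "r j \<le> t" "t \<le> T'" for t
    proof -
      have "g t \<le> g T'" unfolding g_def
        by (rule integral_subset_le) (use that in \<open>auto simp: intS[OF jJ] rate_nonneg[OF thr pos]\<close>)
      then show ?thesis using gT' by simp
    qed
    define a where "a = r j + 2 * p"
    define H where "H = (\<lambda>i x. (1 / (2 * m i * (d i - r i))) * rate \<sigma> r m i x)"
    define G where "G = (\<lambda>i x. (1 / (m i * (d i - r i))) * rate \<tau> r m i x)"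
    have intH: "H i integrable_on {x..y}" if "i \<in> J" for i x y
      unfolding H_def by (rule integrable_on_mult_right[OF intS[OF that]])
    have intG: "G i integrable_on {x..y}" if "i \<in> J" for i x y
      unfolding G_def by (rule integrable_on_mult_right[OF intT[OF that]])
    have Gnn: "0 \<le> G i t" if "i \<in> J" for i t
      unfolding G_def using pos that tnn[OF that] by auto
    have jact: "j \<in> thrash_active J r d w m \<sigma> t" if "t \<in> {a..T'}" for t
    proof -
      have "r j \<le> t" "t \<le> T'" using that pp unfolding a_def by auto
      moreover have "(t - r j) / (d j - r j) \<ge> 2" using that pp unfolding a_def p_def
        by (auto simp: le_divide_eq)
      ultimately show ?thesis using jJ gmono unfolding thrash_active_def g_def work_def by auto
    qed
    have chosen: "r j \<le> r k \<and> d k \<le> t \<and> k \<in> J" if "t \<in> {a..T'}" "\<sigma> t = Some k" for t k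
    proof -
      have ka: "k \<in> thrash_active J r d w m \<sigma> t" by (rule sched_active[OF thr that(2)])
      have "thrash_active J r d w m \<sigma> t \<noteq> {}" using ka by auto
      then obtain k' where "k' \<in> thrash_active J r d w m \<sigma> t" "\<sigma> t = Some k'"
        "\<forall>i\<in>thrash_active J r d w m \<sigma> t. r i \<le> r k'"
        using thr unfolding thrashing_def by blast
      then have "r j \<le> r k" using jact[OF that(1)] that(2) by auto
      moreover have kJ: "k \<in> J" "r k \<le> t" "(t - r k) / (d k - r k) \<ge> 2"
        using ka unfolding thrash_active_def by auto
      moreover have "r k < d k" using pos kJ by auto
      ultimately show ?thesis by (auto simp: le_divide_eq)
    qed
    have busy: "1 \<le> (\<Sum>i\<in>J. H i t)" if tW: "t \<in> {a..T'}" for t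
    proof -
      obtain k where k: "k \<in> thrash_active J r d w m \<sigma> t" "\<sigma> t = Some k"
        using jact[OF tW] thr unfolding thrashing_def by blast
      have kJ: "k \<in> J" "r k \<le> t" "(t - r k) / (d k - r k) \<ge> 2"
        using k unfolding thrash_active_def by auto
      have mk: "r k < d k" "0 < m k" using pos kJ by auto
      have "t - r k \<ge> 2 * (d k - r k)" using kJ mk by (auto simp: le_divide_eq)
      then have "m k * (2 * (d k - r k)) \<le> m k * (t - r k)" using mk by simp
      then have "1 \<le> (m k * (t - r k)) / (2 * m k * (d k - r k))" using mk by (simp add: le_divide_eq)
      then have "1 \<le> H k t" unfolding H_def rate_def using k mk by simp
      also have "H k t \<le> (\<Sum>i\<in>J. H i t)"
      proof (rule member_le_sum)
        fix i assume iJ: "i \<in> J - {k}"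
        then have "0 < m i" "r i < d i" using pos by auto
        then show "0 \<le> H i t" unfolding H_def using rate_nonneg[OF thr pos, of i t] by simp
      qed (use kJ fin in auto)
      finally show ?thesis .
    qed
    have sumG: "(\<Sum>i\<in>J. G i t) \<le> 1" for t
    proof (cases "\<tau> t")
      case None
      then show ?thesis unfolding G_def rate_def by simp
    next
      case (Some k)
      have kJ0: "k \<in> J" using vt Some unfolding valid_schedule_def by auto
      have "(\<Sum>i\<in>J. G i t) = (\<Sum>i\<in>J. if i = k then G k t else 0)"
        by (rule sum.cong) (auto simp: G_def rate_def Some)
      also have "\<dots> \<le> G k t" by (simp add: sum.delta[OF fin])
        (use Gnn kJ0 in auto)
      also have "G k t \<le> 1"
      proof -
        have kJ: "k \<in> J" using vt Some unfolding valid_schedule_def by auto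
        have "r k \<le> t" "t \<le> d k" using tin Some by auto
        moreover have "r k < d k" "0 < m k" using pos kJ by auto
        ultimately show ?thesis unfolding G_def rate_def using Some by (auto simp: field_simps)
      qed
      finally show ?thesis .
    qed
    have perk: "integral {a..T'} (H k) \<le> (1/2) * integral {r j..T'} (G k)" if kJ: "k \<in> J" for k
    proof (cases "\<exists>t0\<in>{a..T'}. \<sigma> t0 = Some k")
      case True
      then obtain t0 where t0: "t0 \<in> {a..T'}" "\<sigma> t0 = Some k" by blast
      have rk: "r j \<le> r k" "d k \<le> T'" using chosen[OF t0] t0 by auto
      have mk: "r k < d k" "0 < m k" using pos kJ by auto
      have "integral {a..T'} (H k) = (1 / (2 * m k * (d k - r k))) * integral {a..T'} (rate \<sigma> r m k)"
        unfolding H_def by simp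
      also have "\<dots> \<le> (1 / (2 * m k * (d k - r k))) * w k"
        by (rule mult_left_mono[OF int_le[OF thr pos kJ]]) (use mk in auto)
      also have "w k \<le> integral {r k..d k} (rate \<tau> r m k)" using tw kJ unfolding work_def by auto
      also have "\<dots> \<le> integral {r j..T'} (rate \<tau> r m k)"
        by (rule integral_subset_le) (use rk in \<open>auto simp: intT[OF kJ] tnn[OF kJ]\<close>)
      finally have "integral {a..T'} (H k) \<le> (1 / (2 * m k * (d k - r k))) * integral {r j..T'} (rate \<tau> r m k)"
        using mk by (simp add: divide_right_mono)
      also have "\<dots> = (1/2) * integral {r j..T'} (G k)" unfolding G_def by simp
      finally show ?thesis .
    next
      case False
      have "integral {a..T'} (H k) = integral {a..T'} (\<lambda>_. 0::real)"
        by (rule integral_cong) (use False in \<open>auto simp: H_def rate_def\<close>)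
      also have "\<dots> \<le> (1/2) * integral {r j..T'} (G k)"
        using integral_nonneg[OF intG[OF kJ] Gnn[OF kJ]] by simp
      finally show ?thesis .
    qed
    have aT: "a \<le> T'" "r j \<le> T'" using pp ep unfolding a_def T'_def T_def by auto
    have "T' - a = integral {a..T'} (\<lambda>_. 1::real)" using aT by simp
    also have "\<dots> \<le> integral {a..T'} (\<lambda>t. \<Sum>i\<in>J. H i t)"
      by (rule integral_le) (auto intro!: integrable_sum fin intH busy)
    also have "\<dots> = (\<Sum>i\<in>J. integral {a..T'} (H i))"
      by (rule integral_sum) (auto intro!: fin intH)
    also have "\<dots> \<le> (\<Sum>i\<in>J. (1/2) * integral {r j..T'} (G i))"
      by (rule sum_mono) (rule perk)
    also have "\<dots> = (1/2) * integral {r j..T'} (\<lambda>t. \<Sum>i\<in>J. G i t)"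
      by (simp only: sum_distrib_left[symmetric] integral_sum[OF fin intG])
    also have "\<dots> \<le> (1/2) * integral {r j..T'} (\<lambda>_. 1::real)"
      by (intro mult_left_mono integral_le) (auto intro!: integrable_sum fin intG sumG)
    also have "\<dots> = (1/2) * (T' - r j)" using aT by simp
    finally have "T' - a \<le> (1/2) * (T' - r j)" .
    then show False using ep pp unfolding a_def T'_def T_def by simp
  qed
  have Tge: "T \<ge> r j" using pp unfolding T_def by simp
  have "completion_time \<sigma> r w m j \<le> T"
    unfolding completion_time_def
    by (rule cInf_lower) (use claim Tge in \<open>auto intro!: bdd_belowI[of _ "r j"]\<close>)
  then have "(completion_time \<sigma> r w m j - r j) / (d j - r j) \<le> 4"
    using pp unfolding T_def p_def by (simp add: divide_le_eq)
  then show "(\<exists>t\<ge>r j. work \<sigma> r m j (r j) t \<ge> w j) \<and>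
                 (completion_time \<sigma> r w m j - r j) / (d j - r j) \<le> 4"
    using claim Tge by blast
qed

end
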